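(* Let $f:E\to X$ be a fibrewise pointed map between fibrewise well-pointed spaces over $B$, and assume that either $E$ and $X$ are normal spaces, or $f$ is a closed fibrewise cofibration and $X$ is normal. Then $$\mathrm{secat}_B(f)\le\mathrm{secat}^B_B(f)\le\mathrm{secat}_B(f)+1.$$
   Context: Fibrewise space over $B$: a space $X$ with a map $p_X:X\to B$; fibrewise map: $f$ with $p_Yf=p_X$. Fibrewise pointed space: fibrewise space with a section $s_X:B\to X$ of $p_X$; fibrewise pointed map: fibrewise map with $fs_X=s_Y$. The fibrewise cylinder $I_B(X)$ is $X\times[0,1]$ with projection $(x,t)\mapsto p_X(x)$; a fibrewise homotopy is a fibrewise map $I_B(X)\to Y$ ($\simeq_B$). A fibrewise pointed homotopy between fibrewise pointed maps is a fibrewise homotopy $H$ with $H(s_X(b),t)=s_Y(b)$ for all $b,t$ ($\simeq^B_B$). A fibrewise map $j:A\to X$ is a fibrewise cofibration if it has the homotopy extension property for fibrewise homotopies (for all fibrewise $g:X\to Y$, $H:I_B(A)\to Y$ with $H(-,0)=gj$ there is $\tilde H:I_B(X)\to Y$ with $\tilde H(-,0)=g$, $\tilde H\circ(j\times\mathrm{id})=H$); it is closed if $j(A)$ is closed. $X$ is fibrewise well-pointed if $s_X$ is a closed fibrewise cofibration. $\mathrm{secat}_B(f)$: least $n$ such that $X$ is covered by $n+1$ open sets $U$ each with a fibrewise map $s:U\to E$ with $fs\simeq_B$ the inclusion $U\hookrightarrow X$. $\mathrm{secat}^B_B(f)$: least $n$ such that $X$ is covered by $n+1$ open sets $U$, each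 containing $s_X(B)$ (so a fibrewise pointed space with section $s_X$) and each admitting a fibrewise pointed map $s:U\to E$ with $fs\simeq^B_B$ the inclusion $U\hookrightarrow X$. Both are $\infty$ if no such $n$ exists. *)

theory Defs
  imports "HOL-Analysis.Analysis"
begin

abbreviation unit_interval :: "real topology" where
  "unit_interval \<equiv> top_of_set {0..1}"

definition fibrewise_space :: "'b topology \<Rightarrow> 'x topology \<Rightarrow> ('x \<Rightarrow> 'b) \<Rightarrow> bool" where
  "fibrewise_space TB X pX \<longleftrightarrow> continuous_map X TB pX"

definition fibrewise_map ::
  "'b topology \<Rightarrow> 'x topology \<Rightarrow> ('x \<Rightarrow> 'b) \<Rightarrow> 'y topology \<Rightarrow> ('y \<Rightarrow> 'b) \<Rightarrow> ('x \<Rightarrow> 'y) \<Rightarrow> bool" where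
  "fibrewise_map TB X pX Y pY f \<longleftrightarrow>
     continuous_map X Y f \<and> (\<forall>x\<in>topspace X. pY (f x) = pX x)"

definition fibrewise_pointed_space ::
  "'b topology \<Rightarrow> 'x topology \<Rightarrow> ('x \<Rightarrow> 'b) \<Rightarrow> ('b \<Rightarrow> 'x) \<Rightarrow> bool" where
  "fibrewise_pointed_space TB X pX sX \<longleftrightarrow>
     fibrewise_space TB X pX \<and> continuous_map TB X sX \<and> (\<forall>b\<in>topspace TB. pX (sX b) = b)"

definition fibrewise_pointed_map ::
  "'b topology \<Rightarrow> 'x topology \<Rightarrow> ('x \<Rightarrow> 'b) \<Rightarrow> ('b \<Rightarrow> 'x) \<Rightarrow>
   'y topology \<Rightarrow> ('y \<Rightarrow> 'b) \<Rightarrow> ('b \<Rightarrow> 'y) \<Rightarrow> ('x \<Rightarrow> 'y) \<Rightarrow> bool" where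
  "fibrewise_pointed_map TB X pX sX Y pY sY f \<longleftrightarrow>
     fibrewise_map TB X pX Y pY f \<and> (\<forall>b\<in>topspace TB. f (sX b) = sY b)"

definition fibrewise_homotopic ::
  "'b topology \<Rightarrow> 'x topology \<Rightarrow> ('x \<Rightarrow> 'b) \<Rightarrow> 'y topology \<Rightarrow> ('y \<Rightarrow> 'b) \<Rightarrow>
   ('x \<Rightarrow> 'y) \<Rightarrow> ('x \<Rightarrow> 'y) \<Rightarrow> bool" where
  "fibrewise_homotopic TB X pX Y pY g h \<longleftrightarrow>
     (\<exists>H. fibrewise_map TB (prod_topology X unit_interval) (pX \<circ> fst) Y pY H \<and>
          (\<forall>x\<in>topspace X. H (x, 0) = g x \<and> H (x, 1) = h x))"

definition fibrewise_pointed_homotopic ::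
  "'b topology \<Rightarrow> 'x topology \<Rightarrow> ('x \<Rightarrow> 'b) \<Rightarrow> ('b \<Rightarrow> 'x) \<Rightarrow>
   'y topology \<Rightarrow> ('y \<Rightarrow> 'b) \<Rightarrow> ('b \<Rightarrow> 'y) \<Rightarrow> ('x \<Rightarrow> 'y) \<Rightarrow> ('x \<Rightarrow> 'y) \<Rightarrow> bool" where
  "fibrewise_pointed_homotopic TB X pX sX Y pY sY g h \<longleftrightarrow>
     (\<exists>H. fibrewise_map TB (prod_topology X unit_interval) (pX \<circ> fst) Y pY H \<and>
          (\<forall>x\<in>topspace X. H (x, 0) = g x \<and> H (x, 1) = h x) \<and>
          (\<forall>b\<in>topspace TB. \<forall>t\<in>{0..1}. H (sX b, t) = sY b))"

text \<open>HOL cannot quantify over all types inside a formula, so the test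
  spaces Y range over all fibrewise spaces whose points lie in the type
  'x + 'a \<times> real; this type is large enough to carry (a copy of) the fibrewise
  mapping cylinder of j, the universal test space, so the notion agrees with the
  usual one.\<close>
definition fibrewise_cofibration ::
  "'b topology \<Rightarrow> 'a topology \<Rightarrow> ('a \<Rightarrow> 'b) \<Rightarrow> 'x topology \<Rightarrow> ('x \<Rightarrow> 'b) \<Rightarrow> ('a \<Rightarrow> 'x) \<Rightarrow> bool" where
  "fibrewise_cofibration TB A pA X pX j \<longleftrightarrow>
     fibrewise_map TB A pA X pX j \<and>
     (\<forall>(Y :: ('x + 'a \<times> real) topology) pY g H.
        fibrewise_space TB Y pY \<longrightarrow>
        fibrewise_map TB X pX Y pY g \<longrightarrow>
        fibrewise_map TB (prod_topology A unit_interval) (pA \<circ> fst) Y pY H \<longrightarrow>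
        (\<forall>a\<in>topspace A. H (a, 0) = g (j a)) \<longrightarrow>
        (\<exists>H'. fibrewise_map TB (prod_topology X unit_interval) (pX \<circ> fst) Y pY H' \<and>
              (\<forall>x\<in>topspace X. H' (x, 0) = g x) \<and>
              (\<forall>a\<in>topspace A. \<forall>t\<in>{0..1}. H' (j a, t) = H (a, t))))"

definition closed_fibrewise_cofibration ::
  "'b topology \<Rightarrow> 'a topology \<Rightarrow> ('a \<Rightarrow> 'b) \<Rightarrow> 'x topology \<Rightarrow> ('x \<Rightarrow> 'b) \<Rightarrow> ('a \<Rightarrow> 'x) \<Rightarrow> bool" where
  "closed_fibrewise_cofibration TB A pA X pX j \<longleftrightarrow>
     fibrewise_cofibration TB A pA X pX j \<and> closedin X (j ` topspace A)"

definition fibrewise_well_pointed ::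
  "'b topology \<Rightarrow> 'x topology \<Rightarrow> ('x \<Rightarrow> 'b) \<Rightarrow> ('b \<Rightarrow> 'x) \<Rightarrow> bool" where
  "fibrewise_well_pointed TB X pX sX \<longleftrightarrow>
     fibrewise_pointed_space TB X pX sX \<and> closed_fibrewise_cofibration TB TB id X pX sX"

text \<open>Fibrewise sectional category secat_B(f) of f : E to X, valued in enat
  (infinity when no finite cover exists: Inf of the empty set).\<close>
definition secat_B ::
  "'b topology \<Rightarrow> 'e topology \<Rightarrow> ('e \<Rightarrow> 'b) \<Rightarrow> 'x topology \<Rightarrow> ('x \<Rightarrow> 'b) \<Rightarrow> ('e \<Rightarrow> 'x) \<Rightarrow> enat" where
  "secat_B TB E pE X pX f = Inf {enat n | n. \<exists>U :: nat \<Rightarrow> 'x set.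
      (\<Union>i\<le>n. U i) = topspace X \<and>
      (\<forall>i\<le>n. openin X (U i) \<and>
         (\<exists>s. fibrewise_map TB (subtopology X (U i)) pX E pE s \<and>
              fibrewise_homotopic TB (subtopology X (U i)) pX X pX (f \<circ> s) id))}"

definition secat_BB ::
  "'b topology \<Rightarrow> 'e topology \<Rightarrow> ('e \<Rightarrow> 'b) \<Rightarrow> ('b \<Rightarrow> 'e) \<Rightarrow>
   'x topology \<Rightarrow> ('x \<Rightarrow> 'b) \<Rightarrow> ('b \<Rightarrow> 'x) \<Rightarrow> ('e \<Rightarrow> 'x) \<Rightarrow> enat" where
  "secat_BB TB E pE sE X pX sX f = Inf {enat n | n. \<exists>U :: nat \<Rightarrow> 'x set.
      (\<Union>i\<le>n. U i) = topspace X \<and>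
      (\<forall>i\<le>n. openin X (U i) \<and> sX ` topspace TB \<subseteq> U i \<and>
         (\<exists>s. fibrewise_pointed_map TB (subtopology X (U i)) pX sX E pE sE s \<and>
              fibrewise_pointed_homotopic TB (subtopology X (U i)) pX sX X pX sX (f \<circ> s) id))}"

end

theory Submission
  imports Defs
begin

lemma glue2:
  assumes "openin Z {z \<in> topspace Z. P z}" "openin Z {z \<in> topspace Z. \<not> P z}"
    "continuous_map (subtopology Z {z \<in> topspace Z. P z}) Y f"
    "continuous_map (subtopology Z {z \<in> topspace Z. \<not> P z}) Y g"
  shows "continuous_map Z Y (\<lambda>z. if P z then f z else g z)"
proof (rule pasting_lemma[where I="{True,False}" and T="\<lambda>b. {z \<in> topspace Z. P z = b}"
      and f="\<lambda>b. if b then f else g"])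
  fix i assume "i \<in> {True, False}"
  then show "openin Z {z \<in> topspace Z. P z = i}" using assms by (cases i) auto
  show "continuous_map (subtopology Z {z \<in> topspace Z. P z = i}) Y (if i then f else g)"
    using assms \<open>i \<in> _\<close> by (cases i) auto
qed auto

lemma prod_sub_restrict:
  assumes "continuous_map (prod_topology (subtopology X U) Z) Y h" "S \<subseteq> U"
  shows "continuous_map (prod_topology (subtopology X S) Z) Y h"
proof -
  have "prod_topology (subtopology X S) Z = subtopology (prod_topology (subtopology X U) Z) (S \<times> topspace Z)"
    using assms(2) by (simp add: prod_topology_subtopology subtopology_subtopology Times_Int_Times Int_absorb1)
  then show ?thesis using assms(1) continuous_map_from_subtopology by metis
qed

lemma halo:
  fixes TB :: "'b topology" and X :: "'x topology" and pX :: "'x \<Rightarrow> 'b" and sX :: "'b \<Rightarrow> 'x"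
  assumes wpX: "fibrewise_well_pointed TB X pX sX"
  obtains N D where "openin X N" "sX ` topspace TB \<subseteq> N"
    "continuous_map (prod_topology X unit_interval) X D"
    "\<And>x t. x \<in> topspace X \<Longrightarrow> t \<in> {0..1} \<Longrightarrow> pX (D (x,t)) = pX x"
    "\<And>x. x \<in> topspace X \<Longrightarrow> D (x,0) = x"
    "\<And>x. x \<in> N \<Longrightarrow> D (x,1) = sX (pX x)"
    "\<And>b t. b \<in> topspace TB \<Longrightarrow> t \<in> {0..1} \<Longrightarrow> D (sX b, t) = sX b"
proof -
  have ps: "fibrewise_pointed_space TB X pX sX" and cof: "fibrewise_cofibration TB TB id X pX sX"
    using wpX by (auto simp: fibrewise_well_pointed_def closed_fibrewise_cofibration_def)
  have cpX: "continuous_map X TB pX" and csX: "continuous_map TB X sX"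
    and psX: "\<And>b. b \<in> topspace TB \<Longrightarrow> pX (sX b) = b"
    using ps by (auto simp: fibrewise_pointed_space_def fibrewise_space_def)
  have sXin: "\<And>b. b \<in> topspace TB \<Longrightarrow> sX b \<in> topspace X"
    using csX continuous_map_image_subset_topspace by blast
  define A :: "('x + 'b \<times> real) set" where
    "A = Inl ` topspace X \<union> {Inr (b,t) | b t. b \<in> topspace TB \<and> 0 < t \<and> t \<le> 1}"
  define q :: "'x + 'b \<times> real \<Rightarrow> 'x \<times> real" where
    "q = case_sum (\<lambda>x. (x,0)) (\<lambda>(b,t). (sX b, t))"
  define Y where "Y = pullback_topology A q (prod_topology X unit_interval)"
  define pY :: "'x + 'b \<times> real \<Rightarrow> 'b" where "pY = case_sum pX fst"
  have tY: "topspace Y = A"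
    unfolding Y_def topspace_pullback_topology A_def q_def using sXin by auto
  have cq: "continuous_map Y (prod_topology X unit_interval) q"
    using continuous_map_pullback[OF continuous_map_id, of A q "prod_topology X unit_interval"]
    unfolding Y_def by simp
  have pYq: "\<And>y. y \<in> A \<Longrightarrow> pY y = pX (fst (q y))"
    unfolding A_def pY_def q_def using psX by auto
  have cpY: "continuous_map Y TB pY"
  proof (rule continuous_map_eq)
    show "continuous_map Y TB (pX \<circ> fst \<circ> q)"
      by (intro continuous_map_compose[OF cq] continuous_map_compose[OF continuous_map_fst] cpX)
    show "\<And>y. y \<in> topspace Y \<Longrightarrow> (pX \<circ> fst \<circ> q) y = pY y" using pYq tY by auto
  qed
  have fsY: "fibrewise_space TB Y pY" using cpY by (simp add: fibrewise_space_def)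
  have cg: "continuous_map X Y Inl"
    unfolding Y_def
  proof (rule continuous_map_pullback')
    have "q \<circ> Inl = (\<lambda>x. (x, 0::real))" by (auto simp: q_def)
    then show "continuous_map X (prod_topology X unit_interval) (q \<circ> Inl)"
      by (simp add: continuous_map_paired)
    show "topspace X \<subseteq> Inl -` A" by (auto simp: A_def)
  qed
  have fg: "fibrewise_map TB X pX Y pY Inl"
    using cg by (simp add: fibrewise_map_def pY_def)
  define H :: "'b \<times> real \<Rightarrow> 'x + 'b \<times> real" where
    "H = (\<lambda>(b,t). if t = 0 then Inl (sX b) else Inr (b,t))"
  have cH: "continuous_map (prod_topology TB unit_interval) Y H"
    unfolding Y_def
  proof (rule continuous_map_pullback')
    have "q \<circ> H = (\<lambda>z. (sX (fst z), snd z))" by (auto simp: q_def H_def fun_eq_iff)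
    then show "continuous_map (prod_topology TB unit_interval) (prod_topology X unit_interval) (q \<circ> H)"
      by (simp add: continuous_map_paired continuous_map_compose[OF continuous_map_fst csX, unfolded o_def]
            continuous_map_snd)
    show "topspace (prod_topology TB unit_interval) \<subseteq> H -` A"
      using sXin by (auto simp: A_def H_def)
  qed
  have fH: "fibrewise_map TB (prod_topology TB unit_interval) (id \<circ> fst) Y pY H"
    using cH psX by (auto simp: fibrewise_map_def H_def pY_def)
  obtain H' where fH': "fibrewise_map TB (prod_topology X unit_interval) (pX \<circ> fst) Y pY H'"
    and H'0: "\<And>x. x \<in> topspace X \<Longrightarrow> H' (x, 0) = Inl x"
    and H'H: "\<And>b t. b \<in> topspace TB \<Longrightarrow> t \<in> {0..1} \<Longrightarrow> H' (sX b, t) = H (b, t)"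
    using cof fsY fg fH unfolding fibrewise_cofibration_def
    apply (elim conjE)
    apply (drule spec[of _ Y], drule spec[of _ pY], drule spec[of _ Inl], drule spec[of _ H])
    apply (auto simp: H_def)
    done
  have cH': "continuous_map (prod_topology X unit_interval) Y H'"
    and pH': "\<And>z. z \<in> topspace (prod_topology X unit_interval) \<Longrightarrow> pY (H' z) = pX (fst z)"
    using fH' by (auto simp: fibrewise_map_def)
  have H'A: "\<And>x t. x \<in> topspace X \<Longrightarrow> t \<in> {0..1} \<Longrightarrow> H' (x,t) \<in> A"
    using cH' tY by (auto simp: continuous_map_def Pi_iff)
  define D where "D = (\<lambda>z. fst (q (H' z)))"
  define N where "N = {x \<in> topspace X. snd (q (H' (x,1))) \<in> {0<..}}"
  show ?thesis
  proof
    have cr: "continuous_map (prod_topology X unit_interval) (prod_topology X unit_interval) (q \<circ> H')"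
      using cH' cq by (rule continuous_map_compose)
    show "continuous_map (prod_topology X unit_interval) X D"
      using continuous_map_compose[OF cr continuous_map_fst] by (simp add: D_def o_def)
    have "continuous_map X (prod_topology X unit_interval) (\<lambda>x. (x, 1::real))"
      by (simp add: continuous_map_paired)
    then have "continuous_map X (prod_topology X unit_interval) (q \<circ> H' \<circ> (\<lambda>x. (x, 1::real)))"
      using cr continuous_map_compose by blast
    then have "continuous_map X unit_interval (\<lambda>x. snd (q (H' (x,1))))"
      using continuous_map_compose[OF _ continuous_map_snd] by (fastforce simp: o_def)
    then have cpsi: "continuous_map X euclideanreal (\<lambda>x. snd (q (H' (x,1))))"
      using continuous_map_in_subtopology by blast
    then show "openin X N" unfolding N_def
      using openin_continuous_map_preimage[OF cpsi, of "{0<..}"] by simp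
    show "\<And>x t. x \<in> topspace X \<Longrightarrow> t \<in> {0..1} \<Longrightarrow> pX (D (x,t)) = pX x"
      using pH' pYq H'A by (auto simp: D_def)
    show "\<And>x. x \<in> topspace X \<Longrightarrow> D (x,0) = x"
      using H'0 by (simp add: D_def q_def)
    show "\<And>b t. b \<in> topspace TB \<Longrightarrow> t \<in> {0..1} \<Longrightarrow> D (sX b, t) = sX b"
      using H'H by (simp add: D_def q_def H_def)
    show "sX ` topspace TB \<subseteq> N"
      using H'H sXin by (auto simp: N_def q_def H_def)
    show "D (x,1) = sX (pX x)" if "x \<in> N" for x
    proof -
      have x: "x \<in> topspace X" and pos: "snd (q (H' (x,1))) > 0" using that by (auto simp: N_def)
      have inA: "H' (x,1) \<in> A" using H'A x by auto
      have pp: "pY (H' (x,1)) = pX x" using pH' x by auto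
      show ?thesis
      proof (cases "H' (x,1)")
        case (Inl y) then show ?thesis using pos by (simp add: q_def)
      next
        case (Inr bt)
        then show ?thesis using pp by (cases bt) (simp add: D_def q_def pY_def)
      qed
    qed
  qed
qed

lemma glue_open_prod:
  assumes "openin X S" "openin X C" "S \<inter> C = {}"
    "continuous_map (prod_topology (subtopology X C) Z) Y f"
    "continuous_map (prod_topology (subtopology X S) Z) Y g"
  shows "continuous_map (prod_topology (subtopology X (S \<union> C)) Z) Y (\<lambda>z. if fst z \<in> C then f z else g z)"
proof (rule glue2)
  let ?Z = "prod_topology (subtopology X (S \<union> C)) Z"
  have SX: "S \<subseteq> topspace X" "C \<subseteq> topspace X" using assms openin_subset by auto
  have e1: "{z \<in> topspace ?Z. fst z \<in> C} = C \<times> topspace Z" using SX by auto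
  have e2: "{z \<in> topspace ?Z. fst z \<notin> C} = S \<times> topspace Z" using SX assms(3) by auto
  have oC: "openin (subtopology X (S \<union> C)) C" and oS: "openin (subtopology X (S \<union> C)) S"
    using assms(1,2) unfolding openin_subtopology by blast+
  show "openin ?Z {z \<in> topspace ?Z. fst z \<in> C}" unfolding e1 using oC by (simp add: openin_prod_Times_iff)
  show "openin ?Z {z \<in> topspace ?Z. fst z \<notin> C}" unfolding e2 using oS by (simp add: openin_prod_Times_iff)
  have "subtopology ?Z {z \<in> topspace ?Z. fst z \<in> C} = prod_topology (subtopology X C) Z"
    unfolding e1 prod_topology_subtopology(1)[symmetric] subtopology_subtopology
    by (metis Int_absorb1 Un_upper2)
  then show "continuous_map (subtopology ?Z {z \<in> topspace ?Z. fst z \<in> C}) Y f" using assms(4) by simp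
  have "subtopology ?Z {z \<in> topspace ?Z. fst z \<notin> C} = prod_topology (subtopology X S) Z"
    unfolding e2 prod_topology_subtopology(1)[symmetric] subtopology_subtopology
    by (metis Int_absorb1 Un_upper1)
  then show "continuous_map (subtopology ?Z {z \<in> topspace ?Z. fst z \<notin> C}) Y g" using assms(5) by simp
qed

lemma glue_open_sub:
  assumes "openin X S" "openin X C" "S \<inter> C = {}"
    "continuous_map (subtopology X C) Y f"
    "continuous_map (subtopology X S) Y g"
  shows "continuous_map (subtopology X (S \<union> C)) Y (\<lambda>x. if x \<in> C then f x else g x)"
proof (rule glue2)
  let ?Z = "subtopology X (S \<union> C)"
  have SX: "S \<subseteq> topspace X" "C \<subseteq> topspace X" using assms openin_subset by auto
  have e1: "{z \<in> topspace ?Z. z \<in> C} = C" using SX by auto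
  have e2: "{z \<in> topspace ?Z. z \<notin> C} = S" using SX assms(3) by auto
  show "openin ?Z {z \<in> topspace ?Z. z \<in> C}" unfolding e1
    using assms(2) unfolding openin_subtopology by blast
  show "openin ?Z {z \<in> topspace ?Z. z \<notin> C}" unfolding e2
    using assms(1) unfolding openin_subtopology by blast
  show "continuous_map (subtopology ?Z {z \<in> topspace ?Z. z \<in> C}) Y f" unfolding e1 subtopology_subtopology
    using assms(4) by (metis Int_absorb1 Un_upper2)
  show "continuous_map (subtopology ?Z {z \<in> topspace ?Z. z \<notin> C}) Y g" unfolding e2 subtopology_subtopology
    using assms(5) by (metis Int_absorb1 Un_upper1)
qed

lemma enat_Inf_in: "S \<noteq> {} \<Longrightarrow> Inf (S :: enat set) \<in> S"
  unfolding Inf_enat_def by (auto intro: LeastI_ex)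

lemma pm_imp: "fibrewise_pointed_map TB X pX sX Y pY sY g \<Longrightarrow> fibrewise_map TB X pX Y pY g"
  by (simp add: fibrewise_pointed_map_def)

lemma ph_imp: "fibrewise_pointed_homotopic TB X pX sX Y pY sY g h \<Longrightarrow> fibrewise_homotopic TB X pX Y pY g h"
  unfolding fibrewise_pointed_homotopic_def fibrewise_homotopic_def
  apply (elim exE conjE)
  apply (rule exI, rule conjI, assumption, assumption)
  done

lemma le1:
  fixes X :: "'x topology"
  shows "secat_B TB E pE X pX f \<le> secat_BB TB E pE sE X pX sX f"
  unfolding secat_B_def secat_BB_def
proof (rule Inf_superset_mono, rule subsetI)
  fix m assume "m \<in> {enat n |n. \<exists>U :: nat \<Rightarrow> 'x set. (\<Union>i\<le>n. U i) = topspace X \<and>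
      (\<forall>i\<le>n. openin X (U i) \<and> sX ` topspace TB \<subseteq> U i \<and>
         (\<exists>s. fibrewise_pointed_map TB (subtopology X (U i)) pX sX E pE sE s \<and>
              fibrewise_pointed_homotopic TB (subtopology X (U i)) pX sX X pX sX (f \<circ> s) id))}"
  then obtain n U where m: "m = enat n" and cov: "(\<Union>i\<le>n. U i) = topspace X"
    and h: "\<And>i. i \<le> n \<Longrightarrow> openin X (U i) \<and> sX ` topspace TB \<subseteq> U i \<and>
         (\<exists>s. fibrewise_pointed_map TB (subtopology X (U i)) pX sX E pE sE s \<and>
              fibrewise_pointed_homotopic TB (subtopology X (U i)) pX sX X pX sX (f \<circ> s) id)"
    unfolding mem_Collect_eq by blast
  have h2: "openin X (U i) \<and>
         (\<exists>s. fibrewise_map TB (subtopology X (U i)) pX E pE s \<and>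
              fibrewise_homotopic TB (subtopology X (U i)) pX X pX (f \<circ> s) id)" if i: "i \<le> n" for i
  proof -
    obtain s where s1: "fibrewise_pointed_map TB (subtopology X (U i)) pX sX E pE sE s"
      and s2: "fibrewise_pointed_homotopic TB (subtopology X (U i)) pX sX X pX sX (f \<circ> s) id"
      using h[OF i] by blast
    then show ?thesis using h[OF i] pm_imp[OF s1] ph_imp[OF s2] by blast
  qed
  show "m \<in> {enat n | n. \<exists>U :: nat \<Rightarrow> 'x set.
      (\<Union>i\<le>n. U i) = topspace X \<and>
      (\<forall>i\<le>n. openin X (U i) \<and>
         (\<exists>s. fibrewise_map TB (subtopology X (U i)) pX E pE s \<and>
              fibrewise_homotopic TB (subtopology X (U i)) pX X pX (f \<circ> s) id))}"
    unfolding mem_Collect_eq m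
    apply (rule exI[of _ n])
    apply (rule conjI[OF refl])
    apply (rule exI[of _ U])
    apply (rule conjI[OF cov])
    using h2 by blast
qed

lemma key:
  fixes TB :: "'b topology"
    and E :: "'e topology" and pE :: "'e \<Rightarrow> 'b" and sE :: "'b \<Rightarrow> 'e"
    and X :: "'x topology" and pX :: "'x \<Rightarrow> 'b" and sX :: "'b \<Rightarrow> 'x"
    and f :: "'e \<Rightarrow> 'x"
  assumes wpE: "fibrewise_well_pointed TB E pE sE"
    and wpX: "fibrewise_well_pointed TB X pX sX"
    and f: "fibrewise_pointed_map TB E pE sE X pX sX f"
    and nX: "normal_space X"
    and cov: "(\<Union>i\<le>n. U i) = topspace X"
    and loc: "\<forall>i\<le>n. openin X (U i) \<and>
         (\<exists>s. fibrewise_map TB (subtopology X (U i)) pX E pE s \<and>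
              fibrewise_homotopic TB (subtopology X (U i)) pX X pX (f \<circ> s) id)"
  shows "secat_BB TB E pE sE X pX sX f \<le> enat (Suc n)"
proof -
  obtain N D where oN: "openin X N" and sBN: "sX ` topspace TB \<subseteq> N"
    and cD: "continuous_map (prod_topology X unit_interval) X D"
    and pD: "\<And>x t. x \<in> topspace X \<Longrightarrow> t \<in> {0..1} \<Longrightarrow> pX (D (x,t)) = pX x"
    and D0: "\<And>x. x \<in> topspace X \<Longrightarrow> D (x,0) = x"
    and D1: "\<And>x. x \<in> N \<Longrightarrow> D (x,1) = sX (pX x)"
    and Ds: "\<And>b t. b \<in> topspace TB \<Longrightarrow> t \<in> {0..1} \<Longrightarrow> D (sX b, t) = sX b"
    using halo[OF wpX] by blast
  have cpX: "continuous_map X TB pX" and csX: "continuous_map TB X sX"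
    and psX: "\<And>b. b \<in> topspace TB \<Longrightarrow> pX (sX b) = b"
    and clB: "closedin X (sX ` topspace TB)"
    using wpX by (auto simp: fibrewise_well_pointed_def fibrewise_pointed_space_def fibrewise_space_def
        closed_fibrewise_cofibration_def)
  have csE: "continuous_map TB E sE" and psE: "\<And>b. b \<in> topspace TB \<Longrightarrow> pE (sE b) = b"
    using wpE by (auto simp: fibrewise_well_pointed_def fibrewise_pointed_space_def)
  have fs: "\<And>b. b \<in> topspace TB \<Longrightarrow> f (sE b) = sX b"
    using f by (simp add: fibrewise_pointed_map_def)
  have pXin: "\<And>x. x \<in> topspace X \<Longrightarrow> pX x \<in> topspace TB"
    using cpX continuous_map_image_subset_topspace by blast
  have NX: "N \<subseteq> topspace X" using oN openin_subset by blast
  have "closedin X (topspace X - N)" using oN by blast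
  moreover have "disjnt (sX ` topspace TB) (topspace X - N)" using sBN by (auto simp: disjnt_def)
  ultimately have "\<exists>C A'. openin X C \<and> openin X A' \<and> sX ` topspace TB \<subseteq> C \<and> topspace X - N \<subseteq> A' \<and> disjnt C A'"
    using nX clB unfolding normal_space_def by blast
  then obtain C A' where oC: "openin X C" and oA: "openin X A'"
    and sBC: "sX ` topspace TB \<subseteq> C" and NA: "topspace X - N \<subseteq> A'" and dCA: "disjnt C A'"
    by blast
  have CX: "C \<subseteq> topspace X" using oC openin_subset by blast
  have CN: "C \<subseteq> N" using CX NA dCA by (auto simp: disjnt_def)
  define K where "K = (\<lambda>z. D (fst z, 1 - snd z))"
  have cK: "continuous_map (prod_topology X unit_interval) X K"
  proof -
    have "continuous_map (prod_topology X unit_interval) euclideanreal (\<lambda>z. 1 - snd z)"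
    proof (rule continuous_map_diff)
      show "continuous_map (prod_topology X unit_interval) euclideanreal (\<lambda>z. 1)" by simp
      have "continuous_map (prod_topology X unit_interval) unit_interval snd"
        by (rule continuous_map_snd)
      then show "continuous_map (prod_topology X unit_interval) euclideanreal snd"
        unfolding continuous_map_in_subtopology by (elim conjE)
    qed
    then have "continuous_map (prod_topology X unit_interval) unit_interval (\<lambda>z. 1 - snd z)"
      by (auto simp: continuous_map_in_subtopology)
    then have "continuous_map (prod_topology X unit_interval) (prod_topology X unit_interval)
        (\<lambda>z. (fst z, 1 - snd z))"
      by (simp add: continuous_map_paired continuous_map_fst)
    then show ?thesis unfolding K_def using continuous_map_compose[OF _ cD] by (simp add: o_def)
  qed
  have cKV: "continuous_map (prod_topology (subtopology X V) unit_interval) X K" for V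
  proof -
    have "continuous_map (prod_topology (subtopology X (topspace X \<inter> V)) unit_interval) X K"
      by (rule prod_sub_restrict[of X "topspace X"]) (simp_all add: cK)
    then show ?thesis by (simp add: subtopology_restrict)
  qed
  have cS: "continuous_map X E (sE \<circ> pX)" using cpX csE by (rule continuous_map_compose)
  have Npiece: "fibrewise_pointed_map TB (subtopology X V) pX sX E pE sE (sE \<circ> pX) \<and>
      fibrewise_pointed_homotopic TB (subtopology X V) pX sX X pX sX (f \<circ> (sE \<circ> pX)) id"
    if "V \<subseteq> N" "sX ` topspace TB \<subseteq> V" for V
  proof
    show "fibrewise_pointed_map TB (subtopology X V) pX sX E pE sE (sE \<circ> pX)"
      using cS psE pXin psX by (auto simp: fibrewise_pointed_map_def fibrewise_map_def
          continuous_map_from_subtopology)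
    show "fibrewise_pointed_homotopic TB (subtopology X V) pX sX X pX sX (f \<circ> (sE \<circ> pX)) id"
      unfolding fibrewise_pointed_homotopic_def fibrewise_map_def
    proof (intro exI conjI ballI)
      show "continuous_map (prod_topology (subtopology X V) unit_interval) X K" by (rule cKV)
      fix z assume "z \<in> topspace (prod_topology (subtopology X V) unit_interval)"
      then show "pX (K z) = (pX \<circ> fst) z" by (auto simp: K_def pD)
    next
      fix x assume x: "x \<in> topspace (subtopology X V)"
      then show "K (x, 0) = (f \<circ> (sE \<circ> pX)) x" using D1 that fs pXin by (auto simp: K_def)
      show "K (x, 1) = id x" using D0 x by (auto simp: K_def)
    next
      fix b t assume "b \<in> topspace TB" "t \<in> {0::real..1}"
      then show "K (sX b, t) = sX b" using Ds by (auto simp: K_def)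
    qed
  qed
  have ex: "\<forall>i. \<exists>sG. i \<le> n \<longrightarrow> fibrewise_map TB (subtopology X (U i)) pX E pE (fst sG) \<and>
      fibrewise_map TB (prod_topology (subtopology X (U i)) unit_interval) (pX \<circ> fst) X pX (snd sG) \<and>
      (\<forall>x\<in>topspace (subtopology X (U i)). snd sG (x, 0) = f (fst sG x) \<and> snd sG (x, 1) = x)"
  proof
    fix i
    show "\<exists>sG. i \<le> n \<longrightarrow> fibrewise_map TB (subtopology X (U i)) pX E pE (fst sG) \<and>
      fibrewise_map TB (prod_topology (subtopology X (U i)) unit_interval) (pX \<circ> fst) X pX (snd sG) \<and>
      (\<forall>x\<in>topspace (subtopology X (U i)). snd sG (x, 0) = f (fst sG x) \<and> snd sG (x, 1) = x)"
    proof (cases "i \<le> n")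
      case True
      then obtain s0 H0 where "fibrewise_map TB (subtopology X (U i)) pX E pE s0"
        "fibrewise_map TB (prod_topology (subtopology X (U i)) unit_interval) (pX \<circ> fst) X pX H0"
        "\<forall>x\<in>topspace (subtopology X (U i)). H0 (x, 0) = (f \<circ> s0) x \<and> H0 (x, 1) = id x"
        using loc unfolding fibrewise_homotopic_def by blast
      then show ?thesis by (intro exI[of _ "(s0,H0)"]) simp
    qed simp
  qed
  obtain sG where sG0: "\<forall>i. i \<le> n \<longrightarrow> fibrewise_map TB (subtopology X (U i)) pX E pE (fst (sG i)) \<and>
      fibrewise_map TB (prod_topology (subtopology X (U i)) unit_interval) (pX \<circ> fst) X pX (snd (sG i)) \<and>
      (\<forall>x\<in>topspace (subtopology X (U i)). snd (sG i) (x, 0) = f (fst (sG i) x) \<and> snd (sG i) (x, 1) = x)"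
    using choice[OF ex] by blast
  have sG: "\<And>i. i \<le> n \<Longrightarrow> fibrewise_map TB (subtopology X (U i)) pX E pE (fst (sG i)) \<and>
      fibrewise_map TB (prod_topology (subtopology X (U i)) unit_interval) (pX \<circ> fst) X pX (snd (sG i)) \<and>
      (\<forall>x\<in>topspace (subtopology X (U i)). snd (sG i) (x, 0) = f (fst (sG i) x) \<and> snd (sG i) (x, 1) = x)"
    using sG0 by blast
  define V where "V i = (if i \<le> n then (A' \<inter> U i) \<union> C else N)" for i
  have Ipiece: "openin X (V i) \<and> sX ` topspace TB \<subseteq> V i \<and>
         (\<exists>s. fibrewise_pointed_map TB (subtopology X (V i)) pX sX E pE sE s \<and>
              fibrewise_pointed_homotopic TB (subtopology X (V i)) pX sX X pX sX (f \<circ> s) id)"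
    if "i \<le> Suc n" for i
  proof (cases "i \<le> n")
    case False
    then show ?thesis using oN sBN Npiece[of N] by (auto simp: V_def)
  next
    case True
    define S where "S = A' \<inter> U i"
    have oU: "openin X (U i)" using loc True by blast
    have oS: "openin X S" using oA oU by (auto simp: S_def)
    have SC: "S \<inter> C = {}" using dCA by (auto simp: S_def disjnt_def)
    have SU: "S \<subseteq> U i" by (auto simp: S_def)
    have Vi: "V i = S \<union> C" using True by (simp add: V_def S_def)
    obtain \<sigma> G where s\<sigma>: "fibrewise_map TB (subtopology X (U i)) pX E pE \<sigma>"
      and sGG: "fibrewise_map TB (prod_topology (subtopology X (U i)) unit_interval) (pX \<circ> fst) X pX G"
      and GG: "\<And>x. x \<in> topspace (subtopology X (U i)) \<Longrightarrow> G (x, 0) = f (\<sigma> x) \<and> G (x, 1) = x"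
      using sG[OF True] by blast
    define s where "s x = (if x \<in> C then (sE \<circ> pX) x else \<sigma> x)" for x
    define H where "H z = (if fst z \<in> C then K z else G z)" for z
    have c\<sigma>: "continuous_map (subtopology X S) E \<sigma>"
      using s\<sigma> SU continuous_map_from_subtopology_mono by (auto simp: fibrewise_map_def)
    have cG: "continuous_map (prod_topology (subtopology X S) unit_interval) X G"
      using sGG SU prod_sub_restrict by (auto simp: fibrewise_map_def)
    have cs: "continuous_map (subtopology X (S \<union> C)) E s"
      unfolding s_def
      by (rule glue_open_sub[OF oS oC SC continuous_map_from_subtopology[OF cS] c\<sigma>])
    have cH: "continuous_map (prod_topology (subtopology X (S \<union> C)) unit_interval) X H"
      unfolding H_def
      by (rule glue_open_prod[OF oS oC SC cKV cG])
    have UX: "U i \<subseteq> topspace X" using oU openin_subset by blast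
    show ?thesis
      unfolding Vi
    proof (intro conjI exI)
      show "openin X (S \<union> C)" using oS oC by blast
      show "sX ` topspace TB \<subseteq> S \<union> C" using sBC by blast
      show "fibrewise_pointed_map TB (subtopology X (S \<union> C)) pX sX E pE sE s"
        unfolding fibrewise_pointed_map_def fibrewise_map_def
      proof (intro conjI ballI cs)
        fix x assume x: "x \<in> topspace (subtopology X (S \<union> C))"
        show "pE (s x) = pX x"
        proof (cases "x \<in> C")
          case True then show ?thesis using x psE pXin by (auto simp: s_def)
        next
          case False
          then have "x \<in> topspace (subtopology X (U i))" using x SU by auto
          then show ?thesis using False s\<sigma> by (auto simp: s_def fibrewise_map_def)
        qed
      next
        fix b assume "b \<in> topspace TB"
        then show "s (sX b) = sE b" using sBC psX by (auto simp: s_def)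
      qed
      have Hends: "H (x, 0) = (f \<circ> s) x \<and> H (x, 1) = id x"
        if x: "x \<in> topspace (subtopology X (S \<union> C))" for x
      proof (cases "x \<in> C")
        case True then show ?thesis using x D0 D1 CN fs pXin by (auto simp: H_def K_def s_def)
      next
        case False
        then have "x \<in> topspace (subtopology X (U i))" using x SU by auto
        then show ?thesis using False GG by (auto simp: H_def s_def)
      qed
      show "fibrewise_pointed_homotopic TB (subtopology X (S \<union> C)) pX sX X pX sX (f \<circ> s) id"
        unfolding fibrewise_pointed_homotopic_def fibrewise_map_def
      proof (intro exI conjI ballI)
        show "continuous_map (prod_topology (subtopology X (S \<union> C)) unit_interval) X H" by (rule cH)
        fix z assume z: "z \<in> topspace (prod_topology (subtopology X (S \<union> C)) unit_interval)"
        show "pX (H z) = (pX \<circ> fst) z"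
        proof (cases "fst z \<in> C")
          case True then show ?thesis using z by (auto simp: H_def K_def pD)
        next
          case False
          then have "z \<in> topspace (prod_topology (subtopology X (U i)) unit_interval)"
            using z SU by auto
          then show ?thesis using False sGG by (auto simp: H_def fibrewise_map_def)
        qed
      next
        fix x assume x: "x \<in> topspace (subtopology X (S \<union> C))"
        show "H (x, 0) = (f \<circ> s) x" using Hends[OF x] by simp
      next
        fix x assume x: "x \<in> topspace (subtopology X (S \<union> C))"
        show "H (x, 1) = id x" using Hends[OF x] by simp
      next
        fix b t assume "b \<in> topspace TB" "t \<in> {0::real..1}"
        then show "H (sX b, t) = sX b" using sBC Ds by (auto simp: H_def K_def)
      qed
    qed
  qed
  have covV: "(\<Union>i\<le>Suc n. V i) = topspace X"
  proof
    show "(\<Union>i\<le>Suc n. V i) \<subseteq> topspace X"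
    proof (rule UN_least)
      fix i assume "i \<in> {..Suc n}"
      then have i: "i \<le> Suc n" by simp
      have "openin X (V i)" by (rule conjunct1[OF Ipiece[OF i]])
      then show "V i \<subseteq> topspace X" by (rule openin_subset)
    qed
    show "topspace X \<subseteq> (\<Union>i\<le>Suc n. V i)"
    proof
      fix x assume x: "x \<in> topspace X"
      show "x \<in> (\<Union>i\<le>Suc n. V i)"
      proof (cases "x \<in> N")
        case True
        have "V (Suc n) = N" by (simp add: V_def)
        then have "x \<in> V (Suc n)" using True by simp
        then show ?thesis by (rule UN_I[rotated]) simp
      next
        case False
        then have xA: "x \<in> A'" using NA x by blast
        have "x \<in> (\<Union>i\<le>n. U i)" using cov x by simp
        then obtain i where i: "i \<le> n" and xU: "x \<in> U i" by blast
        have "x \<in> V i" using i xA xU by (simp add: V_def)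
        then show ?thesis by (rule UN_I[rotated]) (use i in simp)
      qed
    qed
  qed
  show ?thesis
    unfolding secat_BB_def
  proof (rule Inf_lower)
    show "enat (Suc n) \<in> {enat n |n. \<exists>U. (\<Union>i\<le>n. U i) = topspace X \<and>
      (\<forall>i\<le>n. openin X (U i) \<and> sX ` topspace TB \<subseteq> U i \<and>
         (\<exists>s. fibrewise_pointed_map TB (subtopology X (U i)) pX sX E pE sE s \<and>
              fibrewise_pointed_homotopic TB (subtopology X (U i)) pX sX X pX sX (f \<circ> s) id))}"
      unfolding mem_Collect_eq
      apply (rule exI[of _ "Suc n"])
      apply (rule conjI[OF refl])
      apply (rule exI[of _ V])
      apply (rule conjI[OF covV])
      using Ipiece by blast
  qed
qed

theorem theorem4p1:
  fixes TB :: "'b topology"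
    and E :: "'e topology" and pE :: "'e \<Rightarrow> 'b" and sE :: "'b \<Rightarrow> 'e"
    and X :: "'x topology" and pX :: "'x \<Rightarrow> 'b" and sX :: "'b \<Rightarrow> 'x"
    and f :: "'e \<Rightarrow> 'x"
  assumes wpE: "fibrewise_well_pointed TB E pE sE"
    and wpX: "fibrewise_well_pointed TB X pX sX"
    and f: "fibrewise_pointed_map TB E pE sE X pX sX f"
    and normal: "(normal_space E \<and> normal_space X) \<or>
                 (closed_fibrewise_cofibration TB E pE X pX f \<and> normal_space X)"
  shows "secat_B TB E pE X pX f \<le> secat_BB TB E pE sE X pX sX f \<and>
         secat_BB TB E pE sE X pX sX f \<le> secat_B TB E pE X pX f + 1"
proof
  show "secat_B TB E pE X pX f \<le> secat_BB TB E pE sE X pX sX f" by (rule le1)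
  have nX: "normal_space X" using normal by blast
  let ?S = "{enat n | n. \<exists>U :: nat \<Rightarrow> 'x set.
      (\<Union>i\<le>n. U i) = topspace X \<and>
      (\<forall>i\<le>n. openin X (U i) \<and>
         (\<exists>s. fibrewise_map TB (subtopology X (U i)) pX E pE s \<and>
              fibrewise_homotopic TB (subtopology X (U i)) pX X pX (f \<circ> s) id))}"
  have eq: "secat_B TB E pE X pX f = Inf ?S" by (simp add: secat_B_def)
  show "secat_BB TB E pE sE X pX sX f \<le> secat_B TB E pE X pX f + 1"
  proof (cases "?S = {}")
    case True
    then show ?thesis unfolding eq by (simp add: Inf_enat_def)
  next
    case False
    then have "Inf ?S \<in> ?S" by (rule enat_Inf_in)
    then obtain n where n: "Inf ?S = enat n" and "\<exists>U :: nat \<Rightarrow> 'x set. (\<Union>i\<le>n. U i) = topspace X \<and>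
      (\<forall>i\<le>n. openin X (U i) \<and>
         (\<exists>s. fibrewise_map TB (subtopology X (U i)) pX E pE s \<and>
              fibrewise_homotopic TB (subtopology X (U i)) pX X pX (f \<circ> s) id))"
      unfolding mem_Collect_eq by blast
    then obtain U where cov: "(\<Union>i\<le>n. U i) = topspace X"
      and loc: "\<forall>i\<le>n. openin X (U i) \<and>
         (\<exists>s. fibrewise_map TB (subtopology X (U i)) pX E pE s \<and>
              fibrewise_homotopic TB (subtopology X (U i)) pX X pX (f \<circ> s) id)"
      by blast
    have "secat_BB TB E pE sE X pX sX f \<le> enat (Suc n)"
      by (rule key[OF wpE wpX f nX cov loc])
    then show ?thesis unfolding eq n by (simp add: eSuc_enat[symmetric] eSuc_plus_1)
  qed
qed

end
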